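(* Let $\mathbf{x}=x_1x_2\ldots$ be an infinite word and $n\ge1$ an integer with $r(n+1,\mathbf{x})=r(n,\mathbf{x})+1$. Let $j$ be the integer with $1\le j<r(n,\mathbf{x})-n+1$ and $x_j^{j+n-1}=x_{r(n,\mathbf{x})-n+1}^{r(n,\mathbf{x})}$. Then $x_{j+n}=x_{r(n,\mathbf{x})+1}$.
   Context: $x_i^j=x_i\cdots x_j$; $r(n,\mathbf{x})=\min\{m\ge1:\ x_i^{i+n-1}=x_{m-n+1}^{m}\text{ for some } 1\le i\le m-n\}$ (such a $j$ exists and is unique). *)

theory Defs
  imports Main
begin

text \<open>Infinite words are functions x :: nat => 'a, indexed from 1 (x 0 is ignored).
  factor_eq x i k n means x_i^{i+n-1} = x_k^{k+n-1}.\<close>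

definition factor_eq :: "(nat \<Rightarrow> 'a) \<Rightarrow> nat \<Rightarrow> nat \<Rightarrow> nat \<Rightarrow> bool" where
  "factor_eq x i k n \<longleftrightarrow> (\<forall>t<n. x (i + t) = x (k + t))"

definition rset :: "nat \<Rightarrow> (nat \<Rightarrow> 'a) \<Rightarrow> nat set" where
  "rset n x = {m. 1 \<le> m \<and> (\<exists>i. 1 \<le> i \<and> i \<le> m - n \<and> factor_eq x i (m - n + 1) n)}"

definition r :: "nat \<Rightarrow> (nat \<Rightarrow> 'a) \<Rightarrow> nat" where
  "r n x = (LEAST m. m \<in> rset n x)"

end

theory Submission
  imports Defs
begin

theorem lemma5p5:
  fixes x :: "nat \<Rightarrow> 'a" and n j :: nat
  assumes "n \<ge> 1"
    and "rset n x \<noteq> {}" and "rset (n + 1) x \<noteq> {}"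
    and "r (n + 1) x = r n x + 1"
    and "1 \<le> j" and "j < r n x - n + 1"
    and "factor_eq x j (r n x - n + 1) n"
  shows "x (j + n) = x (r n x + 1)"
proof -
  define R where "R = r n x"
  have Rin: "R \<in> rset n x" unfolding R_def r_def using assms(2) by (meson LeastI ex_in_conv)
  have Rmin: "\<And>m. m \<in> rset n x \<Longrightarrow> R \<le> m" unfolding R_def r_def by (simp add: Least_le)
  have R1in: "R + 1 \<in> rset (n+1) x" using assms(3,4) unfolding R_def r_def
    by (metis LeastI ex_in_conv)
  then obtain i where i: "1 \<le> i" "i \<le> R + 1 - (n+1)" "factor_eq x i (R + 1 - (n+1) + 1) (n+1)"
    unfolding rset_def by blast
  from Rin have Rn: "R > n" unfolding rset_def by auto
  have fi: "\<forall>t<n+1. x (i + t) = x (R - n + 1 + t)" using i(3) Rn unfolding factor_eq_def by simp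
  have fj: "\<forall>t<n. x (j + t) = x (R - n + 1 + t)" using assms(7) unfolding factor_eq_def R_def by simp
  have uniq: False if "a < b" "1 \<le> a" "b \<le> R - n" "\<forall>t<n. x (a + t) = x (b + t)" for a b
  proof -
    have "b + n - 1 \<in> rset n x" unfolding rset_def factor_eq_def
      using that assms(1) by (auto intro!: exI[of _ a])
    from Rmin[OF this] that assms(1) show False by linarith
  qed
  have "i = j"
  proof (rule ccontr)
    assume "i \<noteq> j"
    hence "i < j \<or> j < i" by auto
    thus False
    proof
      assume "i < j" thus False using uniq[of i j] i fi fj assms(6) Rn unfolding R_def[symmetric] by auto
    next
      assume "j < i" thus False using uniq[of j i] i fi fj assms(5) Rn by auto
    qed
  qed
  thus ?thesis using fi Rn unfolding R_def by (metis add.commute add_Suc_right diff_add lessI less_imp_le_nat plus_1_eq_Suc)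
qed

end
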